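(* Let $k\in\mathbb Z$ and let $(p_l)_{l\le k}$ be a probability distribution on $\{l\in\mathbb Z:l\le k\}$ with $p_k\in(0,1)$, $p_kp_{k-1}>0$, and $\sum_{l\le k}|l|p_l<\infty$. Let $r_i=\sum_{j\le k-i}p_j$ for $i\ge1$. Then, as $N\to\infty$, $$\sum_{i=2}^\infty\Big(\frac{r_i}{r_1}\Big)^N=O\Big(\Big(\frac{r_2}{r_1}\Big)^N\Big).$$ *)

theory Defs
  imports "HOL-Analysis.Analysis" "HOL-Library.Landau_Symbols"
begin

definition tail_r :: "(int \<Rightarrow> real) \<Rightarrow> int \<Rightarrow> nat \<Rightarrow> real" where
  "tail_r p k i = (\<Sum>\<^sub>\<infinity>j\<in>{..k - int i}. p j)"

end

theory Submission
  imports Defs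
begin

theorem lemma6p3:
  fixes k :: int and p :: "int \<Rightarrow> real"
  assumes nonneg: "\<And>l. l \<le> k \<Longrightarrow> p l \<ge> 0"
    and prob: "(p has_sum 1) {..k}"
    and pk: "0 < p k" "p k < 1"
    and pkm1: "p k * p (k - 1) > 0"
    and moment: "(\<lambda>l. \<bar>real_of_int l\<bar> * p l) summable_on {..k}"
  shows "(\<lambda>N::nat. \<Sum>\<^sub>\<infinity>i\<in>{2::nat..}. (tail_r p k i / tail_r p k 1) ^ N)
           \<in> O(\<lambda>N. (tail_r p k 2 / tail_r p k 1) ^ N)"
proof -
  define r where "r = tail_r p k"
  have psum: "p summable_on {..k}" using prob by (auto simp: summable_on_def)
  have psub: "p summable_on {..k - int i}" for i
    by (rule summable_on_subset_banach[OF psum]) auto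
  have r_nonneg: "r i \<ge> 0" for i
    unfolding r_def tail_r_def by (rule infsum_nonneg) (auto intro: nonneg)
  have r_mono: "r j \<le> r i" if "i \<le> j" for i j
    unfolding r_def tail_r_def
    by (rule infsum_mono2[OF psub psub]) (use that nonneg in auto)
  have p1: "p (k-1) > 0"
    using pkm1 pk by (simp add: zero_less_mult_iff)
  have "1 = infsum p {..k}" using prob by (simp add: infsumI)
  also have "{..k} = insert k {..k - int 1}" by auto
  also have "infsum p \<dots> = p k + r 1"
    unfolding r_def tail_r_def by (rule infsum_insert[OF psub]) auto
  finally have r1: "r 1 = 1 - p k" by simp
  have "r 1 = infsum p (insert (k-1) {..k - int 2})"
    unfolding r_def tail_r_def by (rule arg_cong[where f="infsum p"]) auto
  also have "\<dots> = p (k-1) + r 2"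
    unfolding r_def tail_r_def by (rule infsum_insert[OF psub]) auto
  finally have r2: "r 2 = r 1 - p (k-1)" by simp
  have r1pos: "r 1 > 0" using r1 pk by simp
  define q where "q i = r i / r 1" for i
  have q_nonneg: "q i \<ge> 0" for i using r_nonneg r1pos by (simp add: q_def)
  have q_le: "q i \<le> q 2" if "i \<ge> 2" for i
    using r_mono[OF that] r1pos by (simp add: q_def divide_right_mono)
  have q2lt: "q 2 < 1" using r2 p1 r1pos by (simp add: q_def)
  define M where "M = infsum (\<lambda>j. real_of_int (k - j) * p j) {..k}"
  have jp: "(\<lambda>j. real_of_int j * p j) summable_on {..k}"
  proof -
    have "(\<lambda>j. \<bar>real_of_int j * p j\<bar>) summable_on {..k}"
      using moment by (rule summable_on_cong[THEN iffD1, rotated]) (auto simp: abs_mult nonneg)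
    thus ?thesis using summable_on_iff_abs_summable_on_real by auto
  qed
  have msum: "(\<lambda>j. real_of_int (k - j) * p j) summable_on {..k}"
  proof -
    have "(\<lambda>j. real_of_int k * p j + (- 1) * (real_of_int j * p j)) summable_on {..k}"
      by (intro summable_on_add summable_on_cmult_right psum jp)
    thus ?thesis by (simp add: algebra_simps)
  qed
  have markov: "real i * r i \<le> M" for i
  proof -
    have "real i * r i = infsum (\<lambda>j. real i * p j) {..k - int i}"
      unfolding r_def tail_r_def by (rule infsum_cmult_right[symmetric]) (use psub in auto)
    also have "\<dots> \<le> infsum (\<lambda>j. real_of_int (k - j) * p j) {..k - int i}"
      by (rule infsum_mono[OF summable_on_cmult_right[OF psub]
              summable_on_subset_banach[OF msum]])
         (auto intro!: mult_right_mono nonneg)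
    also have "\<dots> \<le> M" unfolding M_def
      by (rule infsum_mono2[OF summable_on_subset_banach[OF msum] msum]) (auto intro!: mult_nonneg_nonneg nonneg)
    finally show ?thesis .
  qed
  define D where "D = M / r 1"
  have q_D: "q i \<le> D / real i" if "i \<ge> 1" for i
    using markov[of i] r1pos that by (simp add: q_def D_def field_simps)
  define g where "g i = (D / real i)^2" for i
  have gsum: "g summable_on {2::nat..}"
  proof -
    have "summable (\<lambda>n. D^2 * inverse (real n ^ 2))"
      by (intro summable_mult inverse_power_summable) auto
    hence "(\<lambda>n. D^2 * inverse (real n ^ 2)) summable_on UNIV"
      by (subst summable_on_UNIV_nonneg_real_iff) auto
    hence "(\<lambda>n. D^2 * inverse (real n ^ 2)) summable_on {2..}"
      by (rule summable_on_subset_banach) auto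
    moreover have "g = (\<lambda>n. D^2 * inverse (real n ^ 2))"
      by (rule ext) (simp add: g_def power_mult_distrib power_inverse divide_inverse)
    ultimately show ?thesis by simp
  qed
  define C where "C = infsum g {2::nat..}"
  have bound: "(\<Sum>\<^sub>\<infinity>i\<in>{2::nat..}. q i ^ N) \<le> q 2 ^ (N - 2) * C" if N: "N \<ge> 2" for N
  proof -
    have pt: "q i ^ N \<le> q 2 ^ (N - 2) * g i" if "i \<in> {2..}" for i
    proof -
      have "q i ^ N = q i ^ (N - 2) * q i ^ 2" by (metis N le_add_diff_inverse2 power_add)
      also have "\<dots> \<le> q 2 ^ (N - 2) * g i" unfolding g_def
        using that q_le q_nonneg q_D
        by (intro mult_mono power_mono) auto
      finally show ?thesis .
    qed
    have gs2: "(\<lambda>i. q 2 ^ (N - 2) * g i) summable_on {2..}"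
      by (intro summable_on_cmult_right gsum)
    have "(\<Sum>\<^sub>\<infinity>i\<in>{2::nat..}. q i ^ N) \<le> (\<Sum>\<^sub>\<infinity>i\<in>{2::nat..}. q 2 ^ (N - 2) * g i)"
      by (rule infsum_mono[OF summable_on_comparison_test[OF gs2] gs2]) (use pt q_nonneg in auto)
    also have "\<dots> = q 2 ^ (N - 2) * C" unfolding C_def
      by (rule infsum_cmult_right) (use gsum in auto)
    finally show ?thesis .
  qed
  have ev: "eventually (\<lambda>N. norm (\<Sum>\<^sub>\<infinity>i\<in>{2::nat..}. q i ^ N) \<le> (C / q 2 ^ 2) * norm (q 2 ^ N)) at_top"
    using eventually_ge_at_top[of 3]
  proof eventually_elim
    case (elim N)
    have nn: "(\<Sum>\<^sub>\<infinity>i\<in>{2::nat..}. q i ^ N) \<ge> 0"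
      by (rule infsum_nonneg) (use q_nonneg in auto)
    have b: "(\<Sum>\<^sub>\<infinity>i\<in>{2::nat..}. q i ^ N) \<le> q 2 ^ (N - 2) * C" using bound elim by auto
    show ?case
    proof (cases "q 2 = 0")
      case True
      have z: "q 2 ^ (N-2) * C = 0" using elim True by (simp add: power_0_left)
      have "(\<Sum>\<^sub>\<infinity>i\<in>{2::nat..}. q i ^ N) = 0" using b nn z by linarith
      then show ?thesis using True by simp
    next
      case False
      have "q 2 ^ N = q 2 ^ (N - 2) * q 2 ^ 2" using elim by (metis le_add_diff_inverse2 power_add le_trans numeral_le_iff semiring_norm(69) one_le_numeral Suc_leD eval_nat_numeral(3))
      hence "q 2 ^ (N - 2) * C = (C / q 2 ^ 2) * q 2 ^ N" using False by (simp add: field_simps)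
      then show ?thesis using b nn q_nonneg[of 2] by simp
    qed
  qed
  have "(\<lambda>N::nat. \<Sum>\<^sub>\<infinity>i\<in>{2::nat..}. q i ^ N) \<in> O(\<lambda>N. q 2 ^ N)"
    by (rule bigoI[OF ev])
  thus ?thesis by (simp add: q_def r_def)
qed

end
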